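(* Let $\phi_i:\mathbb{R}\to\mathbb{R}$ be twice differentiable, let $x_i\in\mathbb{R}^d\setminus\{0\}$, $y_i\in\mathbb{R}$, and let $f_i(w)=\phi_i(x_i^\top w-y_i)$, assumed non-negative for all $w\in\mathbb{R}^d$. Fix $w^t\in\mathbb{R}^d$ and write $f_i:=f_i(w^t)$, $a_i:=\phi_i'(x_i^\top w^t-y_i)$, $h_i:=\phi_i''(x_i^\top w^t-y_i)$, so that $\nabla f_i(w^t)=a_ix_i$ and $\nabla^2 f_i(w^t)=h_ix_ix_i^\top$. Consider the projection problem $$\min_{w\in\mathbb{R}^d}\ \tfrac12\|w-w^t\|^2\quad\text{s.t.}\quad f_i(w^t)+\langle \nabla f_i(w^t),w-w^t\rangle+\tfrac12\langle \nabla^2 f_i(w^t)(w-w^t),w-w^t\rangle=0 .$$ (i) If $a_i^2-2h_if_i\ge 0$ (and $h_i\neq 0$, $a_i\neq 0$, so that the following expression is defined), then an optimal solution of this problem is $$w^{t+1}=w^t-\frac{a_i}{h_i}\left(1-\frac{\sqrt{a_i^2-2h_if_i}}{|a_i|}\right)\frac{x_i}{\|x_i\|^2}.$$ (ii) If $a_i^2-2h_if_i<0$, then necessarily $h_i>0$, and the point $$w^{t+1}=w^t-\frac{a_i}{h_i}\frac{x_i}{\|x_i\|^2}$$ is a minimizer over $w\in\mathbb{R}^d$ of the local quadratic $f_i(w^t)+\langle \nabla f_i(w^t),w-w^t\rangle+\tfrac12\langle \nabla^2 f_i(w^t)(w-w^t),w-w^t\rangle$.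
   Context: This is the "SP2" step for generalized linear models: projecting $w^t$ onto the zero set of the second-order Taylor expansion of $f_i$ at $w^t$. *)

theory Defs
  imports "HOL-Analysis.Analysis"
begin

text \<open>Second-order Taylor model of f(w) = phi(x.w - y) at wt, written with
  f = f(wt), gradient a*x and Hessian h*x*x^T:
  f + <a x, w - wt> + 1/2 <h x x^T (w - wt), w - wt>.\<close>
definition taylor2 :: "real \<Rightarrow> real \<Rightarrow> real \<Rightarrow> 'a::euclidean_space \<Rightarrow> 'a \<Rightarrow> 'a \<Rightarrow> real" where
  "taylor2 f a h x wt w =
     f + inner (a *\<^sub>R x) (w - wt) + (1/2) * inner ((h * inner x (w - wt)) *\<^sub>R x) (w - wt)"

end

theory Submission
  imports Defs
begin

lemma taylor2_eq: "taylor2 f a h x wt w = f + a * inner x (w - wt) + h / 2 * (inner x (w - wt))\<^sup>2"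
  unfolding taylor2_def by (simp add: power2_eq_square algebra_simps)

lemma root_min:
  fixes a h f r s :: real
  assumes r: "r \<ge> 0" "r\<^sup>2 = a\<^sup>2 - 2*h*f" and h: "h \<noteq> 0" and a: "a \<noteq> 0"
    and q: "f + a * s + h/2 * s\<^sup>2 = 0"
  shows "((a / h) * (1 - r / \<bar>a\<bar>))\<^sup>2 \<le> s\<^sup>2"
proof -
  have e: "(h * s + a)\<^sup>2 = r\<^sup>2"
  proof -
    have "(h * s+a)\<^sup>2 = 2*h*(f + a * s + h/2 * s\<^sup>2) + a\<^sup>2 - 2*h*f"
      by (simp add: power2_eq_square algebra_simps)
    then show ?thesis using q r by simp
  qed
  hence hs: "h * s + a = r \<or> h * s + a = -r"
    by (metis power2_eq_iff)
  have k: "(a / h) * (1 - r / \<bar>a\<bar>) = (a - sgn a * r) / h"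
    using a h by (cases "a > 0") (auto simp: field_simps)
  have "(a - sgn a * r)\<^sup>2 \<le> (h * s)\<^sup>2"
  proof -
    have hs': "h * s = r - a \<or> h * s = - r - a" using hs by linarith
    have "(a - r)\<^sup>2 \<le> (a + r)\<^sup>2" if "a > 0"
      using that r(1) by (simp add: power2_eq_square algebra_simps)
    moreover have "(a + r)\<^sup>2 \<le> (a - r)\<^sup>2" if "a < 0"
      using that r(1) by (simp add: power2_eq_square algebra_simps mult_nonpos_nonneg)
    moreover have "(h * s)\<^sup>2 = (a - r)\<^sup>2 \<or> (h * s)\<^sup>2 = (a + r)\<^sup>2"
    proof (rule disjE[OF hs'])
      assume e1: "h * s = r - a"
      have "(h * s)\<^sup>2 = (r - a)\<^sup>2" by (simp only: e1)
      thus ?thesis by (simp add: power2_commute)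
    next
      assume e1: "h * s = - r - a"
      have "(h * s)\<^sup>2 = (- r - a)\<^sup>2" by (simp only: e1)
      also have "\<dots> = (a + r)\<^sup>2" by (simp add: power2_eq_square algebra_simps)
      finally show ?thesis by simp
    qed
    ultimately show ?thesis using a
      by (cases "a > 0") (auto simp: sgn_if)
  qed
  hence "(a - sgn a * r)\<^sup>2 / h\<^sup>2 \<le> (h * s)\<^sup>2 / h\<^sup>2"
    by (simp add: divide_right_mono)
  thus "((a / h) * (1 - r / \<bar>a\<bar>))\<^sup>2 \<le> s\<^sup>2"
    using h unfolding k by (simp add: power_divide power_mult_distrib)
qed

lemma root_val:
  fixes a h f r :: real
  assumes r: "r \<ge> 0" "r\<^sup>2 = a\<^sup>2 - 2*h*f" and h: "h \<noteq> 0" and a: "a \<noteq> 0"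
  shows "f + a * (-((a / h) * (1 - r / \<bar>a\<bar>))) + h/2 * (-((a / h) * (1 - r / \<bar>a\<bar>)))\<^sup>2 = 0"
proof -
  have k: "(a / h) * (1 - r / \<bar>a\<bar>) = (a - sgn a * r) / h"
    using a h by (cases "a > 0") (auto simp: field_simps)
  have rr: "r * r = a * a - 2 * h * f" using r(2) by (simp add: power2_eq_square)
  show ?thesis unfolding k using h a r
    by (cases "a > 0") (auto simp: field_simps power2_eq_square sgn_if rr)
qed

theorem lemma1:
  fixes phi phi' phi'' :: "real \<Rightarrow> real"
    and x wt :: "'a::euclidean_space" and y :: real
  assumes d1: "\<And>t. (phi has_real_derivative phi' t) (at t)"
    and d2: "\<And>t. (phi' has_real_derivative phi'' t) (at t)"
    and xnz: "x \<noteq> 0"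
    and nonneg: "\<And>w. phi (inner x w - y) \<ge> 0"
  shows "let fi = phi (inner x wt - y); a = phi' (inner x wt - y); h = phi'' (inner x wt - y);
             q = taylor2 fi a h x wt
         in (a\<^sup>2 - 2 * h * fi \<ge> 0 \<and> h \<noteq> 0 \<and> a \<noteq> 0 \<longrightarrow>
               (let w1 = wt - ((a / h) * (1 - sqrt (a\<^sup>2 - 2 * h * fi) / \<bar>a\<bar>) / (norm x)\<^sup>2) *\<^sub>R x
                in q w1 = 0 \<and> (\<forall>w. q w = 0 \<longrightarrow> (1/2) * (norm (w1 - wt))\<^sup>2 \<le> (1/2) * (norm (w - wt))\<^sup>2)))
          \<and> (a\<^sup>2 - 2 * h * fi < 0 \<longrightarrow>
               h > 0 \<and>
               (let w1 = wt - ((a / h) / (norm x)\<^sup>2) *\<^sub>R x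
                in \<forall>w. q w1 \<le> q w))"
proof -
  define fi where "fi = phi (inner x wt - y)"
  define a where "a = phi' (inner x wt - y)"
  define h where "h = phi'' (inner x wt - y)"
  have fi0: "fi \<ge> 0" unfolding fi_def by (rule nonneg)
  have nx: "(norm x)\<^sup>2 > 0" using xnz by simp
  have ixx: "inner x x = (norm x)\<^sup>2" by (simp add: power2_norm_eq_inner)
  have sc: "\<And>c. inner x ((wt - c *\<^sub>R x) - wt) = - c * (norm x)\<^sup>2"
    by (simp add: ixx)
  have sc': "\<And>c. inner x ((wt - (c / (norm x)\<^sup>2) *\<^sub>R x) - wt) = - c"
    using nx by (simp add: sc ixx)
  have cs: "\<And>w. (inner x (w - wt))\<^sup>2 \<le> (norm x)\<^sup>2 * (norm (w - wt))\<^sup>2"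
  proof -
    fix w
    have "\<bar>inner x (w - wt)\<bar> \<le> norm x * norm (w - wt)" by (rule Cauchy_Schwarz_ineq2)
    hence "\<bar>inner x (w - wt)\<bar>\<^sup>2 \<le> (norm x * norm (w - wt))\<^sup>2"
      by (rule power_mono) simp
    thus "(inner x (w - wt))\<^sup>2 \<le> (norm x)\<^sup>2 * (norm (w - wt))\<^sup>2"
      by (simp add: power_mult_distrib)
  qed
  have P1: "a\<^sup>2 - 2 * h * fi \<ge> 0 \<and> h \<noteq> 0 \<and> a \<noteq> 0 \<longrightarrow>
               (let w1 = wt - ((a / h) * (1 - sqrt (a\<^sup>2 - 2 * h * fi) / \<bar>a\<bar>) / (norm x)\<^sup>2) *\<^sub>R x
                in taylor2 fi a h x wt w1 = 0 \<and> (\<forall>w. taylor2 fi a h x wt w = 0 \<longrightarrow> (1/2) * (norm (w1 - wt))\<^sup>2 \<le> (1/2) * (norm (w - wt))\<^sup>2))"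
  proof (intro impI, elim conjE)
    assume D: "a\<^sup>2 - 2 * h * fi \<ge> 0" and h: "h \<noteq> 0" and a: "a \<noteq> 0"
    define r where "r = sqrt (a\<^sup>2 - 2 * h * fi)"
    have r: "r \<ge> 0" "r\<^sup>2 = a\<^sup>2 - 2 * h * fi" using D by (auto simp: r_def)
    define c where "c = (a / h) * (1 - r / \<bar>a\<bar>)"
    define w1 where "w1 = wt - (c / (norm x)\<^sup>2) *\<^sub>R x"
    have s1: "inner x (w1 - wt) = - c" unfolding w1_def by (rule sc')
    have n1: "(norm (w1 - wt))\<^sup>2 = c\<^sup>2 / (norm x)\<^sup>2"
    proof -
      have "(norm (w1 - wt))\<^sup>2 = (c / (norm x)\<^sup>2)\<^sup>2 * (norm x)\<^sup>2"
        by (simp add: w1_def power_mult_distrib power_divide power2_abs)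
      also have "\<dots> = c\<^sup>2 / (norm x)\<^sup>2" using nx by (simp add: power2_eq_square field_simps)
      finally show ?thesis .
    qed
    have "taylor2 fi a h x wt w1 = 0"
      unfolding taylor2_eq s1 c_def using root_val[OF r h a] by simp
    moreover have "(1/2) * (norm (w1 - wt))\<^sup>2 \<le> (1/2) * (norm (w - wt))\<^sup>2"
      if "taylor2 fi a h x wt w = 0" for w
    proof -
      have "c\<^sup>2 \<le> (inner x (w - wt))\<^sup>2"
        unfolding c_def by (rule root_min[OF r h a]) (use that in \<open>simp add: taylor2_eq\<close>)
      also have "\<dots> \<le> (norm x)\<^sup>2 * (norm (w - wt))\<^sup>2" by (rule cs)
      finally have "c\<^sup>2 / (norm x)\<^sup>2 \<le> (norm (w - wt))\<^sup>2"
        using nx by (simp add: divide_le_eq mult.commute)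
      thus ?thesis using n1 by simp
    qed
    ultimately show "let w1 = wt - ((a / h) * (1 - sqrt (a\<^sup>2 - 2 * h * fi) / \<bar>a\<bar>) / (norm x)\<^sup>2) *\<^sub>R x
                in taylor2 fi a h x wt w1 = 0 \<and> (\<forall>w. taylor2 fi a h x wt w = 0 \<longrightarrow> (1/2) * (norm (w1 - wt))\<^sup>2 \<le> (1/2) * (norm (w - wt))\<^sup>2)"
      by (simp add: Let_def w1_def c_def r_def)
  qed
  have P2: "a\<^sup>2 - 2 * h * fi < 0 \<longrightarrow>
               h > 0 \<and>
               (let w1 = wt - ((a / h) / (norm x)\<^sup>2) *\<^sub>R x
                in \<forall>w. taylor2 fi a h x wt w1 \<le> taylor2 fi a h x wt w)"
  proof
    assume D: "a\<^sup>2 - 2 * h * fi < 0"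
    have "0 < h * fi" using D zero_le_power2[of a] by linarith
    hence hp: "h > 0" using fi0 by (simp add: zero_less_mult_iff)
    have "taylor2 fi a h x wt (wt - ((a / h) / (norm x)\<^sup>2) *\<^sub>R x) \<le> taylor2 fi a h x wt w" for w
    proof -
      define s where "s = inner x (w - wt)"
      have "fi + a * s + h / 2 * s\<^sup>2 - (fi + a * (- (a/h)) + h / 2 * (- (a/h))\<^sup>2) = h/2 * (s + a/h)\<^sup>2"
        using hp by (simp add: field_simps power2_eq_square)
      moreover have "h/2 * (s + a/h)\<^sup>2 \<ge> 0" using hp by simp
      ultimately show ?thesis unfolding taylor2_eq sc' s_def[symmetric] by linarith
    qed
    thus "h > 0 \<and> (let w1 = wt - ((a / h) / (norm x)\<^sup>2) *\<^sub>R x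
                in \<forall>w. taylor2 fi a h x wt w1 \<le> taylor2 fi a h x wt w)"
      using hp by simp
  qed
  show ?thesis using P1 P2 unfolding fi_def a_def h_def Let_def by blast
qed

end
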